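(* Let $d\ge 2$, $N\ge 4$, $\ell>0$, and let $m\in\{2,\dots,[\frac{N}{2}]\}$. For an equilateral polygon $\mathcal{P}_N=\{y_1,\dots,y_N\}\subset\mathbb{R}^d$ with edge length $\ell$ let $\mathcal{D}_m(\mathcal{P}_N)$ denote the sum of lengths of all its $m$-diagonals, i.e. of the segments $[y_i,y_{i+m}]$. Then the property $(P_m)$ holds locally: there is a neighbourhood of the regular polygon $\tilde{\mathcal{P}}_N$ in the set of equilateral polygons in $\mathbb{R}^d$ with edge length $\ell$ such that $\mathcal{D}_m(\mathcal{P}_N)<\mathcal{D}_m(\tilde{\mathcal{P}}_N)$ for every $\mathcal{P}_N$ in this neighbourhood which is not a regular polygon (i.e. not the image of $\tilde{\mathcal{P}}_N$ under a Euclidean transformation).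
   Context: A polygon is identified with the ordered set of its vertices $\{y_1,\dots,y_N\}$, indices taken mod $N$; it is equilateral with edge length $\ell$ if $|y_{i+1}-y_i|=\ell$ for all $i$. The regular polygon $\tilde{\mathcal{P}}_N$ of edge length $\ell$ is the planar convex regular $N$-gon with consecutive vertices adjacent, lying on a circle of radius $\ell\,(2\sin\frac{\pi}{N})^{-1}$, determined up to Euclidean transformations. Property $(P_m)$: the quantity $\mathcal{D}_m$ is, in the set of equilateral polygons in $\mathbb{R}^d$ with fixed edge length $\ell$, uniquely maximized (up to Euclidean transformations) by the regular polygon. *)

theory Defs
  imports "HOL-Analysis.Analysis"
begin

text \<open>A polygon with N vertices in R^d is a map y :: nat => real^'d, of which only
the values y 0, ..., y (N-1) matter; indices are taken mod N.\<close>

definition equilateral_polygon :: "nat \<Rightarrow> real \<Rightarrow> (nat \<Rightarrow> real^'d) \<Rightarrow> bool" where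
  "equilateral_polygon N l y \<longleftrightarrow> (\<forall>i<N. dist (y i) (y ((i + 1) mod N)) = l)"

definition diag_sum :: "nat \<Rightarrow> nat \<Rightarrow> (nat \<Rightarrow> real^'d) \<Rightarrow> real" where
  "diag_sum N m y = (\<Sum>i<N. dist (y i) (y ((i + m) mod N)))"

definition euclidean_transformation :: "(real^'d \<Rightarrow> real^'d) \<Rightarrow> bool" where
  "euclidean_transformation f \<longleftrightarrow> (\<forall>x z. dist (f x) (f z) = dist x z)"

text \<open>The regular planar convex N-gon of edge length l (consecutive vertices adjacent),
placed in the plane through c spanned by the orthonormal vectors u, v; it lies on the circle
of radius l / (2 sin (pi/N)) around c.\<close>
definition regular_polygon :: "nat \<Rightarrow> real \<Rightarrow> (nat \<Rightarrow> real^'d) \<Rightarrow> bool" where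
  "regular_polygon N l y \<longleftrightarrow>
     (\<exists>c u v. norm u = 1 \<and> norm v = 1 \<and> inner u v = 0 \<and>
        (\<forall>i<N. y i = c + (l / (2 * sin (pi / real N))) *\<^sub>R
                   (cos (2 * pi * real i / real N) *\<^sub>R u + sin (2 * pi * real i / real N) *\<^sub>R v)))"

end

theory Submission
  imports Defs
begin

definition gs :: "nat \<Rightarrow> real \<Rightarrow> real" where
  "gs m t = (\<Sum>k<m. cos ((real m - 1 - 2 * real k) * t))"

lemma gs_sin: "sin t * gs m t = sin (real m * t)"
proof -
  define f where "f k = sin ((real m - 2 * real k) * t)" for k
  have step: "f k - f (Suc k) = 2 * (sin t * cos ((real m - 1 - 2 * real k) * t))" for k
  proof -
    have "f k - f (Suc k) = 2 * sin (((real m - 2 * real k) * t - (real m - 2 * real (Suc k)) * t) / 2)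
        * cos (((real m - 2 * real k) * t + (real m - 2 * real (Suc k)) * t) / 2)"
      unfolding f_def by (rule sin_diff_sin)
    also have "((real m - 2 * real k) * t - (real m - 2 * real (Suc k)) * t) / 2 = t"
      by (simp add: algebra_simps)
    also have "((real m - 2 * real k) * t + (real m - 2 * real (Suc k)) * t) / 2 = (real m - 1 - 2 * real k) * t"
      by (simp add: field_simps)
    finally show ?thesis by simp
  qed
  have "(\<Sum>k<m. f k - f (Suc k)) = f 0 - f m" by (rule sum_lessThan_telescope')
  also have "f 0 - f m = 2 * sin (real m * t)"
    unfolding f_def by (simp add: algebra_simps)
  finally have "(\<Sum>k<m. 2 * (sin t * cos ((real m - 1 - 2 * real k) * t))) = 2 * sin (real m * t)"
    using step by simp
  then show ?thesis unfolding gs_def by (simp add: sum_distrib_left[symmetric])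
qed

lemma cos_abs_mult: "cos (c * t) = cos (\<bar>c\<bar> * (t::real))"
  by (cases "c \<ge> 0") (simp_all add: abs_if)

lemma gs_term_mono:
  assumes "2 \<le> m" "0 \<le> s" "s \<le> t" "(real m - 1) * t \<le> pi" "k < m"
  shows "cos ((real m - 1 - 2 * real k) * t) \<le> cos ((real m - 1 - 2 * real k) * s)"
proof -
  note k = assms(5)
  let ?c = "\<bar>real m - 1 - 2 * real k\<bar>"
  have c: "?c \<le> real m - 1" using k assms(1) by auto
  have "?c * s \<le> ?c * t" using assms by (simp add: mult_left_mono)
  moreover have "?c * t \<le> pi"
    using c assms by (meson order_trans mult_right_mono order_trans[OF _ assms(4)] )
  moreover have "0 \<le> ?c * s" using assms by simp
  ultimately have "cos (?c * t) \<le> cos (?c * s)"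
    by (subst cos_mono_le_eq) auto
  then show "cos ((real m - 1 - 2 * real k) * t) \<le> cos ((real m - 1 - 2 * real k) * s)"
    by (metis cos_abs_mult)
qed

lemma gs_mono:
  assumes "2 \<le> m" "0 \<le> s" "s \<le> t" "(real m - 1) * t \<le> pi"
  shows "gs m t \<le> gs m s"
  unfolding gs_def by (rule sum_mono) (use gs_term_mono assms in auto)

lemma gs_mono_strict:
  assumes "2 \<le> m" "0 \<le> s" "s < t" "(real m - 1) * t \<le> pi"
  shows "gs m t < gs m s"
  unfolding gs_def
proof (rule sum_strict_mono_ex1)
  show "finite {..<m}" by simp
  show "\<forall>k\<in>{..<m}. cos ((real m - 1 - 2 * real k) * t) \<le> cos ((real m - 1 - 2 * real k) * s)"
    using gs_term_mono[of m s t] assms by auto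
  show "\<exists>k\<in>{..<m}. cos ((real m - 1 - 2 * real k) * t) < cos ((real m - 1 - 2 * real k) * s)"
  proof (rule bexI[of _ 0])
    have "(real m - 1) * s < (real m - 1) * t" using assms by simp
    moreover have "0 \<le> (real m - 1) * s" using assms by simp
    moreover have "(real m - 1) * s \<le> pi" using assms
      by (smt (verit, ccfv_SIG) \<open>(real m - 1) * s < (real m - 1) * t\<close>)
    ultimately show "cos ((real m - 1 - 2 * real 0) * t) < cos ((real m - 1 - 2 * real 0) * s)"
      using assms by (subst cos_mono_less_eq) auto
  qed (use assms in auto)
qed

lemma gs_key:
  assumes m2: "2 \<le> m" and mN: "2 * m \<le> N" and j2: "2 \<le> j" and jN: "2 * j \<le> N"
  shows "(gs m (real j * pi / real N))\<^sup>2 < (gs m (pi / real N))\<^sup>2"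
proof -
  define h where "h = pi / real N"
  define x where "x = real j * pi / real N"
  have Npos: "real N > 0" using mN m2 by simp
  have hpos: "h > 0" unfolding h_def using Npos by simp
  have xh: "x = real j * h" unfolding x_def h_def by simp
  have hx: "h < x" unfolding xh using hpos j2 by simp
  have x2: "x \<le> pi / 2" unfolding x_def using jN Npos
    by (simp add: field_simps)
  define p where "p = pi / (2 * real m)"
  have ppos: "p > 0" unfolding p_def using m2 by simp
  have hp: "h \<le> p" unfolding h_def p_def using mN m2 Npos
    by (simp add: frac_le)
  have mp: "(real m - 1) * p \<le> pi" unfolding p_def using m2
    by (simp add: field_simps)
  have sinp: "sin p > 0" using ppos mp m2 unfolding p_def
    by (intro sin_gt_zero) (auto simp: field_simps)
  have gsp: "gs m p = 1 / sin p"
  proof -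
    have "sin p * gs m p = sin (real m * p)" by (rule gs_sin)
    also have "real m * p = pi / 2" unfolding p_def using m2 by simp
    finally show ?thesis using sinp by (simp add: field_simps)
  qed
  have gsh: "gs m p \<le> gs m h"
    by (rule gs_mono[OF m2]) (use hpos hp mp in auto)
  have gshpos: "gs m h > 0" using gsh gsp sinp by (smt (verit) divide_pos_pos)
  have sinx: "sin x > 0" using hx hpos x2 by (intro sin_gt_zero) auto
  have gsx: "sin x * gs m x = sin (real m * x)" by (rule gs_sin)
  show ?thesis
  proof (cases "real m * x \<le> pi")
    case True
    have "(real m - 1) * x \<le> pi" using True hx hpos by (simp add: algebra_simps)
    then have lt: "gs m x < gs m h" by (intro gs_mono_strict[OF m2]) (use hpos hx in auto)
    have "sin (real m * x) \<ge> 0" using True hx hpos by (intro sin_ge_zero) auto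
    then have "gs m x \<ge> 0" using gsx sinx by (metis zero_le_mult_iff linorder_not_le)
    then have "(gs m x)\<^sup>2 < (gs m h)\<^sup>2" using lt by (intro power_strict_mono) auto
    then show ?thesis unfolding x_def h_def .
  next
    case False
    have "\<bar>sin x * gs m x\<bar> \<le> 1" using gsx by simp
    then have a: "sin x * \<bar>gs m x\<bar> \<le> 1" using sinx by (simp add: abs_mult)
    have mpos: "real m > 0" using m2 by simp
    have "pi / real m < x" using False mpos by (simp add: divide_less_eq mult.commute)
    moreover have "p < pi / real m" unfolding p_def using mpos by (simp add: divide_strict_left_mono)
    ultimately have "p < x" by simp
    then have spx: "sin p < sin x" using ppos x2 by (subst sin_mono_less_eq) auto
    have "\<bar>gs m x\<bar> < 1 / sin p"
    proof (cases "gs m x = 0")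
      case True then show ?thesis using sinp by simp
    next
      case False
      then have "sin p * \<bar>gs m x\<bar> < sin x * \<bar>gs m x\<bar>" using spx by simp
      then have "sin p * \<bar>gs m x\<bar> < 1" using a by simp
      then show ?thesis using sinp by (simp add: field_simps)
    qed
    then have "\<bar>gs m x\<bar> < gs m p" using gsp by simp
    then have "\<bar>gs m x\<bar> < gs m h" using gsh by simp
    then have "(gs m x)\<^sup>2 < (gs m h)\<^sup>2"
      using power_strict_mono[of "\<bar>gs m x\<bar>" "gs m h" 2] by simp
    then show ?thesis unfolding x_def h_def .
  qed
qed

definition om :: "nat \<Rightarrow> complex" where "om N = cis (2 * pi / real N)"

lemma om_pow: "om N ^ k = cis (2 * pi * real k / real N)"
proof -
  have "om N ^ k = cis (real k * (2 * pi / real N))" unfolding om_def by (rule Complex.DeMoivre)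
  also have "real k * (2 * pi / real N) = 2 * pi * real k / real N" by simp
  finally show ?thesis .
qed

lemma om_pow_N: "N > 0 \<Longrightarrow> om N ^ N = 1"
  unfolding om_pow by simp

lemma om_pow_mod: assumes "N > 0" shows "om N ^ k = om N ^ (k mod N)"
proof -
  have e: "N * (k div N) + k mod N = k" by simp
  have "om N ^ k = om N ^ (N * (k div N) + k mod N)" by (simp only: e)
  also have "\<dots> = (om N ^ N) ^ (k div N) * om N ^ (k mod N)" by (simp only: power_add power_mult)
  finally show ?thesis using om_pow_N[OF assms] by simp
qed

lemma om_pow_eq1: assumes "N > 0" shows "om N ^ k = 1 \<longleftrightarrow> N dvd k"
proof
  assume "N dvd k"
  then obtain q where "k = N * q" by auto
  then show "om N ^ k = 1" using om_pow_N[OF assms] by (simp add: power_mult)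
next
  assume "om N ^ k = 1"
  then have "Re (cis (2 * pi * real k / real N)) = Re 1" unfolding om_pow by simp
  then have "cos (2 * pi * real k / real N) = 1" by simp
  then obtain n :: int where n: "2 * pi * real k / real N = real_of_int n * 2 * pi"
    using cos_one_2pi_int by blast
  then have "real k = real_of_int n * real N" using assms by (simp add: field_simps)
  then have "real_of_int (int k) = real_of_int (n * int N)" by simp
  then have "int k = n * int N" by (simp only: of_int_eq_iff)
  then have "int N dvd int k" by simp
  then show "N dvd k" by simp
qed

lemma norm_om_pow [simp]: "cmod (om N ^ k) = 1"
  unfolding om_pow by simp

lemma cnj_om_mult: "cnj (om N ^ k) * om N ^ k = 1"
  by (metis complex_norm_square mult.commute norm_om_pow one_power2 of_real_1)

lemma cnj_om_pow: assumes "N > 0" "i \<le> N" shows "cnj (om N ^ i) = om N ^ (N - i)"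
proof -
  have a: "om N ^ (N - i) * om N ^ i = 1" using assms om_pow_N[OF assms(1)]
    by (simp add: power_add[symmetric])
  have b: "cnj (om N ^ i) * om N ^ i = 1" by (rule cnj_om_mult)
  have "cnj (om N ^ i) = cnj (om N ^ i) * (om N ^ (N - i) * om N ^ i)" by (simp only: a mult_1_right)
  also have "\<dots> = om N ^ (N - i) * (cnj (om N ^ i) * om N ^ i)" by (simp only: mult_ac)
  also have "\<dots> = om N ^ (N - i)" by (simp only: b mult_1_right)
  finally show ?thesis .
qed

lemma om_geo: assumes "N > 0"
  shows "(\<Sum>j<N. om N ^ (k * j)) = (if N dvd k then of_nat N else 0)"
proof -
  have "(\<Sum>j<N. om N ^ (k * j)) = (\<Sum>j<N. (om N ^ k) ^ j)" by (simp add: power_mult)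
  also have "\<dots> = (if om N ^ k = 1 then of_nat N else (1 - (om N ^ k) ^ N) / (1 - om N ^ k))"
    by (rule sum_gp_strict)
  also have "(om N ^ k) ^ N = 1" using om_pow_N[OF assms]
  proof -
    have "(om N ^ k) ^ N = (om N ^ N) ^ k" by (simp only: power_mult[symmetric] mult.commute)
    then show ?thesis using om_pow_N[OF assms] by simp
  qed
  finally show ?thesis using om_pow_eq1[OF assms] by simp
qed

lemma dvd_shift_iff: fixes i i' N :: nat assumes "i < N" "i' < N" shows "N dvd (i' + (N - i)) \<longleftrightarrow> i = i'"
proof (cases "i < i'")
  case True
  then have e: "i' + (N - i) = N + (i' - i)" using assms by linarith
  have "\<not> N dvd (i' - i)" using nat_dvd_not_less[of "i' - i" N] True assms by linarith
  have "N dvd N + (i' - i) \<longleftrightarrow> N dvd (i' - i)" by (rule dvd_add_right_iff) simp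
  then show ?thesis unfolding e using True \<open>\<not> N dvd (i' - i)\<close> by simp
next
  case False
  show ?thesis
  proof (cases "i = i'")
    case True then show ?thesis using assms by simp
  next
    case ne: False
    then have "0 < i' + (N - i)" "i' + (N - i) < N" using False assms by linarith+
    then show ?thesis using ne nat_dvd_not_less[of "i' + (N - i)" N] by simp
  qed
qed

lemma om_orth: assumes "i < N" "i' < N"
  shows "(\<Sum>j<N. om N ^ (i' * j) * cnj (om N ^ (i * j))) = (if i = i' then of_nat N else 0)"
proof -
  have N: "N > 0" using assms by simp
  have "om N ^ (i' * j) * cnj (om N ^ (i * j)) = om N ^ ((i' + (N - i)) * j)" for j
  proof -
    have "cnj (om N ^ (i * j)) = cnj ((om N ^ i) ^ j)" by (simp add: power_mult)
    also have "\<dots> = (cnj (om N ^ i)) ^ j" by (rule complex_cnj_power)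
    also have "\<dots> = (om N ^ (N - i)) ^ j" using cnj_om_pow[OF N, of i] assms by simp
    finally have "om N ^ (i' * j) * cnj (om N ^ (i * j)) = (om N ^ i') ^ j * (om N ^ (N - i)) ^ j"
      by (simp add: power_mult)
    also have "\<dots> = om N ^ ((i' + (N - i)) * j)"
      by (simp only: power_mult_distrib[symmetric] power_add[symmetric] power_mult)
    finally show ?thesis .
  qed
  then have "(\<Sum>j<N. om N ^ (i' * j) * cnj (om N ^ (i * j))) = (\<Sum>j<N. om N ^ ((i' + (N - i)) * j))"
    by simp
  also have "\<dots> = (if N dvd (i' + (N - i)) then of_nat N else 0)" by (rule om_geo[OF N])
  finally show ?thesis using dvd_shift_iff[OF assms] by simp
qed

lemma sum_shift1: fixes N :: nat shows "(\<Sum>i<N. g ((i + 1) mod N)) = (\<Sum>i<N. (g i :: 'a::comm_monoid_add))"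
proof (cases N)
  case 0 then show ?thesis by simp
next
  case (Suc n)
  have "(\<Sum>i<Suc n. g ((i + 1) mod Suc n)) = (\<Sum>i<n. g ((i + 1) mod Suc n)) + g ((n + 1) mod Suc n)"
    by (rule sum.lessThan_Suc)
  also have "(n + 1) mod Suc n = 0" by simp
  also have "(\<Sum>i<n. g ((i + 1) mod Suc n)) = (\<Sum>i<n. g (Suc i))"
  proof (rule sum.cong[OF refl])
    fix i assume "i \<in> {..<n}"
    then have "(i + 1) mod Suc n = Suc i" by (simp add: mod_less)
    then show "g ((i + 1) mod Suc n) = g (Suc i)" by simp
  qed
  also have "(\<Sum>i<n. g (Suc i)) + g 0 = (\<Sum>i<Suc n. g i)"
    by (subst sum.lessThan_Suc_shift) (simp only: add.commute)
  finally show ?thesis using Suc by simp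
qed

lemma sum_shift: fixes N k :: nat shows "(\<Sum>i<N. g ((i + k) mod N)) = (\<Sum>i<N. (g i :: 'a::comm_monoid_add))"
proof (induction k)
  case 0
  show ?case by simp
next
  case (Suc k)
  have "(\<Sum>i<N. g ((i + Suc k) mod N)) = (\<Sum>i<N. (\<lambda>j. g ((j + k) mod N)) ((i + 1) mod N))"
  proof (intro sum.cong refl)
    fix i
    have "((i + 1) mod N + k) mod N = (i + 1 + k) mod N" by (rule mod_add_left_eq)
    then show "g ((i + Suc k) mod N) = g (((i + 1) mod N + k) mod N)" by simp
  qed
  also have "\<dots> = (\<Sum>i<N. g ((i + k) mod N))" by (rule sum_shift1)
  finally show ?case using Suc.IH by simp
qed

definition dft :: "nat \<Rightarrow> (nat \<Rightarrow> real) \<Rightarrow> nat \<Rightarrow> complex" where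
  "dft N x j = (\<Sum>i<N. complex_of_real (x i) * om N ^ (i * j))"

lemma parseval: assumes "N > 0"
  shows "(\<Sum>j<N. (cmod (dft N x j))\<^sup>2) = real N * (\<Sum>i<N. (x i)\<^sup>2)"
proof -
  have "complex_of_real (\<Sum>j<N. (cmod (dft N x j))\<^sup>2) = (\<Sum>j<N. dft N x j * cnj (dft N x j))"
    by (simp only: of_real_sum complex_norm_square)
  also have "\<dots> = (\<Sum>j<N. \<Sum>i'<N. \<Sum>i<N. complex_of_real (x i' * x i) * (om N ^ (i' * j) * cnj (om N ^ (i * j))))"
  proof (intro sum.cong refl)
    fix j
    have c: "cnj (dft N x j) = (\<Sum>i<N. complex_of_real (x i) * cnj (om N ^ (i * j)))"
      unfolding dft_def by (simp del: complex_cnj_power)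
    show "dft N x j * cnj (dft N x j) = (\<Sum>i'<N. \<Sum>i<N. complex_of_real (x i' * x i) * (om N ^ (i' * j) * cnj (om N ^ (i * j))))"
      unfolding c unfolding dft_def sum_product by (simp add: mult_ac del: complex_cnj_power)
  qed
  also have "\<dots> = (\<Sum>i'<N. \<Sum>j<N. \<Sum>i<N. complex_of_real (x i' * x i) * (om N ^ (i' * j) * cnj (om N ^ (i * j))))"
    by (rule sum.swap)
  also have "\<dots> = (\<Sum>i'<N. \<Sum>i<N. \<Sum>j<N. complex_of_real (x i' * x i) * (om N ^ (i' * j) * cnj (om N ^ (i * j))))"
    by (rule sum.cong[OF refl], rule sum.swap)
  also have "\<dots> = (\<Sum>i'<N. \<Sum>i<N. complex_of_real (x i' * x i) * (if i = i' then of_nat N else 0))"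
  proof (intro sum.cong refl)
    fix i' i assume a: "i' \<in> {..<N}" "i \<in> {..<N}"
    show "(\<Sum>j<N. complex_of_real (x i' * x i) * (om N ^ (i' * j) * cnj (om N ^ (i * j)))) =
      complex_of_real (x i' * x i) * (if i = i' then of_nat N else 0)"
      unfolding sum_distrib_left[symmetric] using om_orth[of i N i'] a by simp
  qed
  also have "\<dots> = (\<Sum>i'<N. complex_of_real (x i' * x i') * of_nat N)"
    by (simp add: if_distrib cong: if_cong)
  also have "\<dots> = complex_of_real (real N * (\<Sum>i<N. (x i)\<^sup>2))"
    by (simp add: sum_distrib_left power2_eq_square mult_ac)
  finally show ?thesis using of_real_eq_iff by blast
qed

lemma dft_inv: assumes "i < N"
  shows "(\<Sum>j<N. dft N x j * cnj (om N ^ (i * j))) = complex_of_real (real N * x i)"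
proof -
  have "(\<Sum>j<N. dft N x j * cnj (om N ^ (i * j)))
      = (\<Sum>j<N. \<Sum>i'<N. complex_of_real (x i') * (om N ^ (i' * j) * cnj (om N ^ (i * j))))"
    unfolding dft_def by (simp add: sum_distrib_right sum_distrib_left mult_ac del: complex_cnj_power)
  also have "\<dots> = (\<Sum>i'<N. \<Sum>j<N. complex_of_real (x i') * (om N ^ (i' * j) * cnj (om N ^ (i * j))))"
    by (rule sum.swap)
  also have "\<dots> = (\<Sum>i'<N. complex_of_real (x i') * (if i = i' then of_nat N else 0))"
  proof (intro sum.cong refl)
    fix i' assume a: "i' \<in> {..<N}"
    show "(\<Sum>j<N. complex_of_real (x i') * (om N ^ (i' * j) * cnj (om N ^ (i * j)))) =
      complex_of_real (x i') * (if i = i' then of_nat N else 0)"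
      unfolding sum_distrib_left[symmetric] using om_orth[of i N i'] a assms by simp
  qed
  also have "\<dots> = complex_of_real (real N * x i)"
    using assms by (simp add: if_distrib cong: if_cong)
  finally show ?thesis .
qed

lemma dft_shift: assumes "N > 0"
  shows "dft N (\<lambda>i. x ((i + k) mod N)) j = dft N x j * cnj (om N ^ (k * j))"
proof -
  have e: "om N ^ (((i + k) mod N) * j) = om N ^ (i * j) * om N ^ (k * j)" for i
  proof -
    have "om N ^ (((i + k) mod N) * j) = om N ^ ((((i + k) mod N) * j) mod N)" by (rule om_pow_mod[OF assms])
    also have "(((i + k) mod N) * j) mod N = ((i + k) * j) mod N" by (simp add: mod_mult_left_eq)
    also have "om N ^ (((i + k) * j) mod N) = om N ^ ((i + k) * j)" by (rule om_pow_mod[OF assms, symmetric])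
    finally show ?thesis by (simp add: algebra_simps power_add)
  qed
  have "dft N x j * cnj (om N ^ (k * j))
      = (\<Sum>i<N. complex_of_real (x ((i + k) mod N)) * om N ^ (((i + k) mod N) * j)) * cnj (om N ^ (k * j))"
    unfolding dft_def using sum_shift[where g="\<lambda>i. complex_of_real (x i) * om N ^ (i * j)" and N=N and k=k] by simp
  also have "\<dots> = (\<Sum>i<N. complex_of_real (x ((i + k) mod N)) * om N ^ (i * j) * (cnj (om N ^ (k * j)) * om N ^ (k * j)))"
    unfolding e by (simp add: sum_distrib_right sum_distrib_left mult_ac del: complex_cnj_power)
  also have "\<dots> = dft N (\<lambda>i. x ((i + k) mod N)) j"
    unfolding dft_def cnj_om_mult by simp
  finally show ?thesis by simp
qed

definition Gw :: "nat \<Rightarrow> nat \<Rightarrow> nat \<Rightarrow> complex" where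
  "Gw N m j = (\<Sum>k<m. om N ^ (k * j))"

lemma dft_window: assumes "N > 0"
  shows "dft N (\<lambda>i. \<Sum>k<m. x ((i + k) mod N)) j = dft N x j * cnj (Gw N m j)"
proof -
  have "dft N (\<lambda>i. \<Sum>k<m. x ((i + k) mod N)) j = (\<Sum>k<m. dft N (\<lambda>i. x ((i + k) mod N)) j)"
    unfolding dft_def by (simp add: sum_distrib_right sum.swap[of _ "{..<N}" "{..<m}"])
  also have "\<dots> = (\<Sum>k<m. dft N x j * cnj (om N ^ (k * j)))"
    using dft_shift[OF assms] by simp
  also have "\<dots> = dft N x j * cnj (Gw N m j)"
    unfolding Gw_def by (simp add: sum_distrib_left del: complex_cnj_power)
  finally show ?thesis .
qed

lemma cmod_1_cis_sq: "(cmod (1 - cis a))\<^sup>2 = 4 * (sin (a / 2))\<^sup>2"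
proof -
  have "(cmod (1 - cis a))\<^sup>2 = (1 - cos a)\<^sup>2 + (sin a)\<^sup>2" by (simp add: cmod_power2)
  also have "\<dots> = 2 - 2 * cos a" by (simp add: power2_diff algebra_simps)
  also have "cos a = 1 - 2 * (sin (a / 2))\<^sup>2" using cos_double_sin[of "a/2"] by simp
  finally show ?thesis by simp
qed

lemma Gw_cmod: assumes "0 < j" "j < N"
  shows "(cmod (Gw N m j))\<^sup>2 = (gs m (real j * pi / real N))\<^sup>2"
proof -
  have N: "N > 0" using assms by simp
  define x where "x = real j * pi / real N"
  define z where "z = om N ^ j"
  have z: "z = cis (2 * x)" unfolding z_def x_def om_pow by (simp add: field_simps)
  have zm: "z ^ m = cis (2 * (real m * x))" unfolding z Complex.DeMoivre by (simp add: algebra_simps)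
  have z1: "z \<noteq> 1" unfolding z_def using om_pow_eq1[OF N, of j] assms by auto
  have G: "Gw N m j = (\<Sum>k<m. z ^ k)" unfolding Gw_def z_def power_mult[symmetric] by (simp add: mult.commute)
  also have "\<dots> = (1 - z ^ m) / (1 - z)" using z1 by (simp add: sum_gp_strict)
  finally have "Gw N m j * (1 - z) = 1 - z ^ m" using z1 by simp
  then have "(cmod (Gw N m j))\<^sup>2 * (cmod (1 - z))\<^sup>2 = (cmod (1 - z ^ m))\<^sup>2"
    by (metis norm_mult power_mult_distrib)
  then have e: "(cmod (Gw N m j))\<^sup>2 * (4 * (sin x)\<^sup>2) = 4 * (sin (real m * x))\<^sup>2"
    unfolding zm unfolding z cmod_1_cis_sq by simp
  have sx: "sin x \<noteq> 0"
  proof -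
    have "0 < x" "x < pi" unfolding x_def using assms by (auto simp: field_simps)
    then show ?thesis using sin_gt_zero by fastforce
  qed
  have "4 * (sin (real m * x))\<^sup>2 = (4 * (sin x)\<^sup>2) * (gs m x)\<^sup>2"
    using gs_sin[of x m] by (simp add: power_mult_distrib[symmetric] mult_ac)
  then show ?thesis using e sx unfolding x_def[symmetric] by simp
qed

lemma Gw_sym: assumes "0 < j" "j < N"
  shows "cmod (Gw N m (N - j)) = cmod (Gw N m j)"
proof -
  have N: "N > 0" using assms by simp
  have "Gw N m (N - j) = cnj (Gw N m j)"
    unfolding Gw_def cnj_sum
  proof (rule sum.cong[OF refl])
    fix k
    have "om N ^ (k * (N - j)) = (om N ^ (N - j)) ^ k" by (simp only: power_mult[symmetric] mult.commute)
    also have "\<dots> = (cnj (om N ^ j)) ^ k" using cnj_om_pow[OF N, of j] assms by simp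
    also have "\<dots> = cnj (om N ^ (k * j))" by (simp only: complex_cnj_power[symmetric] power_mult[symmetric] mult.commute)
    finally show "om N ^ (k * (N - j)) = cnj (om N ^ (k * j))" .
  qed
  then show ?thesis by simp
qed

definition F1 :: "nat \<Rightarrow> nat \<Rightarrow> real" where "F1 N m = (cmod (Gw N m 1))\<^sup>2"

lemma Gw_le:
  assumes m2: "2 \<le> m" and mN: "2 * m \<le> N" and j: "1 \<le> j" "j < N"
  shows "(cmod (Gw N m j))\<^sup>2 \<le> F1 N m"
    and "2 \<le> j \<Longrightarrow> j + 2 \<le> N \<Longrightarrow> (cmod (Gw N m j))\<^sup>2 < F1 N m"
proof -
  have F: "F1 N m = (gs m (pi / real N))\<^sup>2"
    unfolding F1_def using Gw_cmod[of 1 N m] j by simp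
  have lt: "(cmod (Gw N m j'))\<^sup>2 < F1 N m" if "2 \<le> j'" "2 * j' \<le> N" for j'
    using Gw_cmod[of j' N m] gs_key[OF m2 mN that] that F by simp
  have main: "(cmod (Gw N m j))\<^sup>2 \<le> F1 N m \<and> (2 \<le> j \<longrightarrow> j + 2 \<le> N \<longrightarrow> (cmod (Gw N m j))\<^sup>2 < F1 N m)"
  proof (cases "2 * j \<le> N")
    case True
    show ?thesis
    proof (cases "j = 1")
      case True then show ?thesis unfolding F1_def by simp
    next
      case False
      then show ?thesis using lt[of j] True j by force
    qed
  next
    case False
    define j' where "j' = N - j"
    have s: "cmod (Gw N m j) = cmod (Gw N m j')"
      using Gw_sym[of j' N m] j False unfolding j'_def by simp
    show ?thesis
    proof (cases "j' = 1")
      case True then show ?thesis using s j False unfolding F1_def j'_def by auto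
    next
      case ne: False
      have "2 \<le> j'" "2 * j' \<le> N" using ne False j unfolding j'_def by auto
      then show ?thesis using lt[of j'] s by simp
    qed
  qed
  then show "(cmod (Gw N m j))\<^sup>2 \<le> F1 N m" by blast
  show "2 \<le> j \<Longrightarrow> j + 2 \<le> N \<Longrightarrow> (cmod (Gw N m j))\<^sup>2 < F1 N m" using main by blast
qed

lemma om_pow_Nm1: assumes "N > 0" shows "om N ^ (i * (N - 1)) = cnj (om N ^ i)"
proof -
  have "om N ^ (i * (N - 1)) = (om N ^ (N - 1)) ^ i" by (simp only: power_mult[symmetric] mult.commute)
  also have "om N ^ (N - 1) = cnj (om N ^ 1)" using cnj_om_pow[OF assms, of 1] assms by simp
  finally show ?thesis by (simp del: power_one_right)
qed

lemma window_ineq: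
  fixes x :: "nat \<Rightarrow> real"
  assumes m2: "2 \<le> m" and mN: "2 * m \<le> N" and sx: "(\<Sum>i<N. x i) = 0"
  shows "(\<Sum>i<N. (\<Sum>k<m. x ((i + k) mod N))\<^sup>2) \<le> F1 N m * (\<Sum>i<N. (x i)\<^sup>2)"
    and "(\<Sum>i<N. (\<Sum>k<m. x ((i + k) mod N))\<^sup>2) = F1 N m * (\<Sum>i<N. (x i)\<^sup>2) \<Longrightarrow>
         \<exists>a b. \<forall>i<N. x i = a * cos (2 * pi * real i / real N) + b * sin (2 * pi * real i / real N)"
proof -
  define s where "s i = (\<Sum>k<m. x ((i + k) mod N))" for i
  have N: "N > 0" using m2 mN by simp
  have X0: "dft N x 0 = 0" unfolding dft_def
    by (simp del: of_real_sum add: of_real_sum[symmetric] sx)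
  have key: "real N * (\<Sum>i<N. (s i)\<^sup>2) = (\<Sum>j<N. (cmod (dft N x j))\<^sup>2 * (cmod (Gw N m j))\<^sup>2)"
  proof -
    have "real N * (\<Sum>i<N. (s i)\<^sup>2) = (\<Sum>j<N. (cmod (dft N s j))\<^sup>2)" by (rule parseval[OF N, symmetric])
    also have "\<dots> = (\<Sum>j<N. (cmod (dft N x j))\<^sup>2 * (cmod (Gw N m j))\<^sup>2)"
      unfolding s_def dft_window[OF N] by (simp add: norm_mult power_mult_distrib)
    finally show ?thesis .
  qed
  have rhs: "real N * (F1 N m * (\<Sum>i<N. (x i)\<^sup>2)) = (\<Sum>j<N. (cmod (dft N x j))\<^sup>2 * F1 N m)"
  proof -
    have "(\<Sum>j<N. (cmod (dft N x j))\<^sup>2 * F1 N m) = (\<Sum>j<N. (cmod (dft N x j))\<^sup>2) * F1 N m"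
      by (rule sum_distrib_right[symmetric])
    then show ?thesis using parseval[OF N, of x] by simp
  qed
  have trm: "(cmod (dft N x j))\<^sup>2 * (cmod (Gw N m j))\<^sup>2 \<le> (cmod (dft N x j))\<^sup>2 * F1 N m"
    if "j < N" for j
  proof (cases "j = 0")
    case True then show ?thesis using X0 by simp
  next
    case False
    then show ?thesis using Gw_le(1)[OF m2 mN, of j] that by (intro mult_left_mono) auto
  qed
  have le: "real N * (\<Sum>i<N. (s i)\<^sup>2) \<le> real N * (F1 N m * (\<Sum>i<N. (x i)\<^sup>2))"
    unfolding key rhs by (rule sum_mono) (use trm in auto)
  then show "(\<Sum>i<N. (\<Sum>k<m. x ((i + k) mod N))\<^sup>2) \<le> F1 N m * (\<Sum>i<N. (x i)\<^sup>2)"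
    using N unfolding s_def by simp
  assume eq: "(\<Sum>i<N. (\<Sum>k<m. x ((i + k) mod N))\<^sup>2) = F1 N m * (\<Sum>i<N. (x i)\<^sup>2)"
  have "(\<Sum>j<N. (cmod (dft N x j))\<^sup>2 * F1 N m - (cmod (dft N x j))\<^sup>2 * (cmod (Gw N m j))\<^sup>2) = 0"
    using key rhs eq unfolding s_def by (simp add: sum_subtractf)
  then have z: "\<forall>j\<in>{..<N}. (cmod (dft N x j))\<^sup>2 * F1 N m - (cmod (dft N x j))\<^sup>2 * (cmod (Gw N m j))\<^sup>2 = 0"
    by (subst sum_nonneg_eq_0_iff[symmetric]) (use trm in auto)
  have Xz: "dft N x j = 0" if "2 \<le> j" "j + 2 \<le> N" for j
  proof -
    have "(cmod (Gw N m j))\<^sup>2 < F1 N m" using Gw_le(2)[OF m2 mN, of j] that by auto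
    moreover have "(cmod (dft N x j))\<^sup>2 * (F1 N m - (cmod (Gw N m j))\<^sup>2) = 0"
      using z that by (auto simp: algebra_simps)
    ultimately show ?thesis by simp
  qed
  define X1 where "X1 = dft N x 1"
  have XN1: "dft N x (N - 1) = cnj X1"
    unfolding X1_def dft_def using om_pow_Nm1[OF N] by simp
  have N4: "1 \<noteq> N - 1" "1 < N" using m2 mN by auto
  show "\<exists>a b. \<forall>i<N. x i = a * cos (2 * pi * real i / real N) + b * sin (2 * pi * real i / real N)"
  proof (intro exI allI impI)
    fix i assume i: "i < N"
    let ?f = "\<lambda>j. dft N x j * cnj (om N ^ (i * j))"
    have "(\<Sum>j<N. ?f j) = (\<Sum>j\<in>{1, N - 1}. ?f j)"
    proof (rule sum.mono_neutral_right)
      show "\<forall>j\<in>{..<N} - {1, N - 1}. ?f j = 0"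
      proof
        fix j assume j: "j \<in> {..<N} - {1, N - 1}"
        show "?f j = 0"
        proof (cases "j = 0")
          case True then show ?thesis using X0 by simp
        next
          case False
          have "2 \<le> j" "j + 2 \<le> N" using j False by auto
          then show ?thesis using Xz[of j] by simp
        qed
      qed
    qed (use N4 in auto)
    also have "\<dots> = ?f 1 + ?f (N - 1)" using N4 by simp
    also have "\<dots> = X1 * cnj (om N ^ i) + cnj (X1 * cnj (om N ^ i))"
      unfolding XN1 X1_def using om_pow_Nm1[OF N, of i] by simp
    finally have "complex_of_real (real N * x i) = X1 * cnj (om N ^ i) + cnj (X1 * cnj (om N ^ i))"
      using dft_inv[OF i, of x] by simp
    then have "real N * x i = 2 * Re (X1 * cnj (om N ^ i))"
      by (metis Re_complex_of_real complex_add_cnj)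
    also have "\<dots> = 2 * (Re X1 * cos (2 * pi * real i / real N) + Im X1 * sin (2 * pi * real i / real N))"
      unfolding om_pow by (simp add: cis_cnj)
    finally show "x i = (2 * Re X1 / real N) * cos (2 * pi * real i / real N) + (2 * Im X1 / real N) * sin (2 * pi * real i / real N)"
      using N by (simp add: field_simps)
  qed
qed

definition refl_along :: "'a::real_inner \<Rightarrow> 'a \<Rightarrow> 'a" where
  "refl_along n x = x - (2 * inner x n / inner n n) *\<^sub>R n"

lemma refl_add: "refl_along n (x + z) = refl_along n x + refl_along n z"
  unfolding refl_along_def by (simp add: inner_add_left add_divide_distrib scaleR_add_left algebra_simps)

lemma refl_diff: "refl_along n (x - z) = refl_along n x - refl_along n z"
  unfolding refl_along_def by (simp add: inner_diff_left diff_divide_distrib scaleR_diff_left algebra_simps)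

lemma refl_scale: "refl_along n (a *\<^sub>R x) = a *\<^sub>R refl_along n x"
  unfolding refl_along_def by (simp add: algebra_simps)

lemma refl_inner: "inner (refl_along n x) (refl_along n z) = inner x z"
proof (cases "inner n n = 0")
  case True
  then show ?thesis unfolding refl_along_def by simp
next
  case False
  show ?thesis unfolding refl_along_def
    using False by (simp add: inner_diff_left inner_diff_right algebra_simps inner_commute)
qed

lemma refl_norm: "norm (refl_along n x) = norm x"
  using refl_inner[of n x x] by (simp add: norm_eq_sqrt_inner)

lemma refl_swap: assumes "norm a = norm b" shows "refl_along (a - b) a = b"
proof (cases "a = b")
  case True then show ?thesis unfolding refl_along_def by simp
next
  case False
  have nn: "inner (a - b) (a - b) \<noteq> 0" using False by simp
  have "inner a a = inner b b" using assms by (simp add: norm_eq_sqrt_inner)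
  then have h: "2 * inner a (a - b) = inner (a - b) (a - b)"
    by (simp add: inner_diff_left inner_diff_right inner_commute)
  have q: "2 * inner a (a - b) / inner (a - b) (a - b) = 1" unfolding h using nn by (rule divide_self)
  show ?thesis unfolding refl_along_def q by simp
qed

lemma refl_fix: assumes "inner x n = 0" shows "refl_along n x = x"
  unfolding refl_along_def using assms by simp

lemma orthonormal_comb_norm2:
  assumes "norm u = 1" "norm v = 1" "inner u v = 0"
  shows "(norm (a *\<^sub>R u + b *\<^sub>R v))\<^sup>2 = a\<^sup>2 + b\<^sup>2"
proof -
  have "inner u u = 1" "inner v v = 1" using assms by (simp_all add: norm_eq_sqrt_inner)
  then show ?thesis using assms(3) unfolding power2_norm_eq_inner
    by (simp add: inner_add_left inner_add_right inner_commute power2_eq_square)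
qed

lemma cauchy_sum:
  fixes a :: "nat \<Rightarrow> real"
  assumes "N > 0"
  shows "(\<Sum>i<N. a i)\<^sup>2 \<le> real N * (\<Sum>i<N. (a i)\<^sup>2)"
    and "(\<Sum>i<N. a i)\<^sup>2 = real N * (\<Sum>i<N. (a i)\<^sup>2) \<Longrightarrow> \<forall>i<N. a i = (\<Sum>i<N. a i) / real N"
proof -
  define S where "S = (\<Sum>i<N. a i)"
  define T where "T = (\<Sum>i<N. (a i)\<^sup>2)"
  define A where "A = S / real N"
  have NA: "real N * A = S" unfolding A_def using assms by simp
  have e1: "(\<Sum>i<N. (a i - A)\<^sup>2) = (\<Sum>i<N. ((a i)\<^sup>2 - 2 * A * a i) + A\<^sup>2)"
    by (rule sum.cong[OF refl]) (simp add: power2_diff)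
  have e2: "(\<Sum>i<N. ((a i)\<^sup>2 - 2 * A * a i) + A\<^sup>2) = T - 2 * A * S + real N * A\<^sup>2"
    unfolding T_def S_def sum.distrib sum_subtractf sum_distrib_left[symmetric] by simp
  have e3: "real N * A\<^sup>2 = A * S" using NA[symmetric] by (simp add: power2_eq_square)
  have e4: "real N * (T - A * S) = real N * T - S\<^sup>2"
    using NA[symmetric] by (simp add: algebra_simps power2_eq_square)
  have e: "real N * (\<Sum>i<N. (a i - A)\<^sup>2) = real N * T - S\<^sup>2"
    unfolding e1 e2 e3 e4[symmetric] by (simp add: algebra_simps)
  have "0 \<le> (\<Sum>i<N. (a i - A)\<^sup>2)" by (rule sum_nonneg) simp
  then have p: "0 \<le> real N * (\<Sum>i<N. (a i - A)\<^sup>2)" by simp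
  show "(\<Sum>i<N. a i)\<^sup>2 \<le> real N * (\<Sum>i<N. (a i)\<^sup>2)"
    using p e unfolding S_def[symmetric] T_def[symmetric] by linarith
  assume eq: "(\<Sum>i<N. a i)\<^sup>2 = real N * (\<Sum>i<N. (a i)\<^sup>2)"
  then have "real N * (\<Sum>i<N. (a i - A)\<^sup>2) = 0" using e unfolding S_def[symmetric] T_def[symmetric] by linarith
  then have "(\<Sum>i<N. (a i - A)\<^sup>2) = 0" using assms by simp
  then have "\<forall>i\<in>{..<N}. (a i - A)\<^sup>2 = 0" using sum_nonneg_eq_0_iff[of "{..<N}" "\<lambda>i. (a i - A)\<^sup>2"] by simp
  then have "\<forall>i<N. a i = A" by simp
  then show "\<forall>i<N. a i = (\<Sum>i<N. a i) / real N" unfolding A_def S_def .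
qed

lemma norm2_vec: "(norm (v :: real^'d))\<^sup>2 = (\<Sum>c\<in>UNIV. (v $ c)\<^sup>2)"
  unfolding power2_norm_eq_inner inner_vec_def by (simp add: power2_eq_square)

lemma trig_sums:
  assumes N: "N > 0" and k: "\<not> N dvd k"
  shows "(\<Sum>i<N. cos (real k * (2 * pi * real i / real N))) = 0"
    and "(\<Sum>i<N. sin (real k * (2 * pi * real i / real N))) = 0"
proof -
  have e: "om N ^ (k * i) = cis (real k * (2 * pi * real i / real N))" for i
  proof -
    have "om N ^ (k * i) = cis (2 * pi * real (k * i) / real N)" by (rule om_pow)
    also have "2 * pi * real (k * i) / real N = real k * (2 * pi * real i / real N)" by simp
    finally show ?thesis .
  qed
  have "(\<Sum>i<N. om N ^ (k * i)) = 0" using om_geo[OF N, of k] k by simp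
  then have z: "(\<Sum>i<N. cis (real k * (2 * pi * real i / real N))) = 0" by (simp only: e)
  have "(\<Sum>i<N. cos (real k * (2 * pi * real i / real N))) = Re (\<Sum>i<N. cis (real k * (2 * pi * real i / real N)))"
    by (simp only: Re_sum cis.sel)
  also have "\<dots> = 0" unfolding z by simp
  finally show "(\<Sum>i<N. cos (real k * (2 * pi * real i / real N))) = 0" .
  have "(\<Sum>i<N. sin (real k * (2 * pi * real i / real N))) = Im (\<Sum>i<N. cis (real k * (2 * pi * real i / real N)))"
    by (simp only: Im_sum cis.sel)
  also have "\<dots> = 0" unfolding z by simp
  finally show "(\<Sum>i<N. sin (real k * (2 * pi * real i / real N))) = 0" .
qed

lemma iso_exists:
  fixes c c' u v u' v' :: "real^'d"
  assumes "norm u = 1" "norm v = 1" "inner u v = 0"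
    and "norm u' = 1" "norm v' = 1" "inner u' v' = 0"
  shows "\<exists>f. euclidean_transformation f \<and>
           (\<forall>r a b. f (c' + r *\<^sub>R (a *\<^sub>R u' + b *\<^sub>R v')) = c + r *\<^sub>R (a *\<^sub>R u + b *\<^sub>R v))"
proof -
  define R1 where "R1 = refl_along (u' - u)"
  define w where "w = R1 v'"
  define R2 where "R2 = refl_along (w - v)"
  define f where "f x = c + R2 (R1 (x - c'))" for x
  have R1u: "R1 u' = u" unfolding R1_def by (rule refl_swap) (use assms in simp)
  have nw: "norm w = 1" unfolding w_def R1_def using assms by (simp add: refl_norm)
  have R2w: "R2 w = v" unfolding R2_def by (rule refl_swap) (use nw assms in simp)
  have "inner u w = inner (R1 u') (R1 v')" by (simp only: R1u w_def)
  also have "\<dots> = inner u' v'" unfolding R1_def by (rule refl_inner)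
  finally have "inner u w = 0" using assms by simp
  then have "inner u (w - v) = 0" using assms by (simp add: inner_diff_right)
  then have R2u: "R2 u = u" unfolding R2_def by (rule refl_fix)
  have lin: "R2 (R1 (a *\<^sub>R x + b *\<^sub>R z)) = a *\<^sub>R R2 (R1 x) + b *\<^sub>R R2 (R1 z)" for a b x z
    unfolding R1_def R2_def by (simp add: refl_add refl_scale)
  have "euclidean_transformation f"
    unfolding euclidean_transformation_def
  proof (intro allI)
    fix x z
    have "f x - f z = R2 (R1 (x - z))"
      unfolding f_def R1_def R2_def by (simp add: refl_diff[symmetric])
    then show "dist (f x) (f z) = dist x z" unfolding dist_norm R1_def R2_def by (simp add: refl_norm)
  qed
  moreover have "f (c' + r *\<^sub>R (a *\<^sub>R u' + b *\<^sub>R v')) = c + r *\<^sub>R (a *\<^sub>R u + b *\<^sub>R v)" for r a b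
  proof -
    have "f (c' + r *\<^sub>R (a *\<^sub>R u' + b *\<^sub>R v')) = c + R2 (R1 ((r * a) *\<^sub>R u' + (r * b) *\<^sub>R v'))"
      unfolding f_def by (simp add: scaleR_add_right)
    also have "\<dots> = c + ((r * a) *\<^sub>R u + (r * b) *\<^sub>R v)"
      unfolding lin using R1u R2u R2w w_def by simp
    finally show ?thesis by (simp add: scaleR_add_right)
  qed
  ultimately show ?thesis by blast
qed

lemma F1_trig:
  assumes "2 \<le> m" "2 * m \<le> N"
  shows "F1 N m * (4 * (sin (pi / real N))\<^sup>2) = 4 * (sin (real m * pi / real N))\<^sup>2"
proof -
  have F: "F1 N m = (gs m (pi / real N))\<^sup>2"
    unfolding F1_def using Gw_cmod[of 1 N m] assms by simp
  have "sin (pi / real N) * gs m (pi / real N) = sin (real m * (pi / real N))" by (rule gs_sin)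
  then have "(sin (real m * pi / real N))\<^sup>2 = (sin (pi / real N))\<^sup>2 * (gs m (pi / real N))\<^sup>2"
    by (simp add: power_mult_distrib[symmetric])
  then show ?thesis unfolding F by simp
qed

lemma two_minus_cos: "2 - 2 * cos (2 * x) = 4 * (sin (x::real))\<^sup>2"
  using cos_double_sin[of x] by simp

lemma reg_diag:
  fixes u v c :: "real^'d"
  assumes uv: "norm u = 1" "norm v = 1" "inner u v = 0"
    and N: "N > 0" and mN: "m < N" and i: "i < N"
    and Q: "\<forall>i<N. Q i = c + r *\<^sub>R (cos (2 * pi * real i / real N) *\<^sub>R u + sin (2 * pi * real i / real N) *\<^sub>R v)"
  shows "(dist (Q i) (Q ((i + m) mod N)))\<^sup>2 = r\<^sup>2 * (4 * (sin (real m * pi / real N))\<^sup>2)"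
proof -
  define k where "k = (i + m) mod N"
  have k: "k < N" unfolding k_def using N by simp
  define ti where "ti = 2 * pi * real i / real N"
  define tk where "tk = 2 * pi * real k / real N"
  have "Q i - Q k = r *\<^sub>R ((cos ti - cos tk) *\<^sub>R u + (sin ti - sin tk) *\<^sub>R v)"
    using Q i k unfolding ti_def tk_def by (simp add: algebra_simps)
  then have "(dist (Q i) (Q k))\<^sup>2 = r\<^sup>2 * ((cos ti - cos tk)\<^sup>2 + (sin ti - sin tk)\<^sup>2)"
    unfolding dist_norm using orthonormal_comb_norm2[OF uv] by (simp add: power_mult_distrib)
  also have "(cos ti - cos tk)\<^sup>2 + (sin ti - sin tk)\<^sup>2 = 2 - 2 * cos (ti - tk)"
    by (simp add: power2_diff cos_diff algebra_simps)
  also have "cos (ti - tk) = cos (2 * (real m * pi / real N))"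
  proof (cases "i + m < N")
    case True
    then have "k = i + m" unfolding k_def by simp
    then have "ti - tk = - (2 * (real m * pi / real N))" unfolding ti_def tk_def
      by (simp add: field_simps add_divide_distrib)
    then show ?thesis by simp
  next
    case False
    then have "k = i + m - N" unfolding k_def using mN i by (simp add: mod_if)
    then have "real k = real i + real m - real N" using False by simp
    then have d: "real i - real k = real N - real m" by simp
    have "ti - tk = 2 * pi * (real i - real k) / real N" unfolding ti_def tk_def
      by (simp add: diff_divide_distrib algebra_simps)
    also have "\<dots> = 2 * pi - 2 * (real m * pi / real N)" unfolding d using N
      by (simp add: field_simps)
    finally have "ti - tk = 2 * pi - 2 * (real m * pi / real N)" .
    then show ?thesis by (simp add: cos_diff)
  qed
  also have "2 - 2 * cos (2 * (real m * pi / real N)) = 4 * (sin (real m * pi / real N))\<^sup>2"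
    by (rule two_minus_cos)
  finally show ?thesis unfolding k_def .
qed

lemma AB_orth:
  fixes A B :: "real^'d"
  assumes N: "N \<ge> 5"
    and e: "\<forall>i<N. norm (cos (2 * pi * real i / real N) *\<^sub>R A + sin (2 * pi * real i / real N) *\<^sub>R B) = l"
  shows "inner A B = 0" "norm A = l" "norm B = l"
proof -
  define t where "t i = 2 * pi * real i / real N" for i
  define C where "C i = cos (2 * t i)" for i
  define S where "S i = sin (2 * t i)" for i
  define a where "a = inner A A"
  define b where "b = inner B B"
  define w where "w = inner A B"
  have N0: "N > 0" using N by simp
  have nA: "norm A = l" using e N0 by (metis cos_zero sin_zero scaleR_one scaleR_zero_left add.right_neutral of_nat_0 mult_zero_right div_0)
  have id: "l\<^sup>2 = (a + b) / 2 + (a - b) / 2 * C i + w * S i" if i: "i < N" for i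
  proof -
    have "l\<^sup>2 = (norm (cos (t i) *\<^sub>R A + sin (t i) *\<^sub>R B))\<^sup>2" using e i unfolding t_def by simp
    also have "\<dots> = a * (cos (t i))\<^sup>2 + b * (sin (t i))\<^sup>2 + 2 * w * (sin (t i) * cos (t i))"
      unfolding power2_norm_eq_inner a_def b_def w_def
      by (simp add: inner_add_left inner_add_right inner_commute power2_eq_square algebra_simps)
    also have "(cos (t i))\<^sup>2 = (1 + C i) / 2" unfolding C_def using cos_double_cos[of "t i"] by simp
    also have "(sin (t i))\<^sup>2 = (1 - C i) / 2" unfolding C_def using cos_double_sin[of "t i"] by simp
    also have "2 * w * (sin (t i) * cos (t i)) = w * S i" unfolding S_def sin_double by simp
    finally show ?thesis by (simp add: field_simps)
  qed
  have nd2: "\<not> N dvd 2" "\<not> N dvd 4" using N by (auto dest: dvd_imp_le)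
  have t2: "real 2 * (2 * pi * real i / real N) = 2 * t i" for i unfolding t_def by simp
  have t4: "real 4 * (2 * pi * real i / real N) = 2 * (2 * t i)" for i unfolding t_def by simp
  have sC: "(\<Sum>i<N. C i) = 0" using trig_sums(1)[OF N0 nd2(1)] unfolding C_def t2 .
  have sS: "(\<Sum>i<N. S i) = 0" using trig_sums(2)[OF N0 nd2(1)] unfolding S_def t2 .
  have sC4: "(\<Sum>i<N. cos (2 * (2 * t i))) = 0" using trig_sums(1)[OF N0 nd2(2)] unfolding t4 .
  have sS4: "(\<Sum>i<N. sin (2 * (2 * t i))) = 0" using trig_sums(2)[OF N0 nd2(2)] unfolding t4 .
  have "(\<Sum>i<N. (C i)\<^sup>2) = (\<Sum>i<N. 1 / 2 + cos (2 * (2 * t i)) / 2)"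
    unfolding C_def
  proof (intro sum.cong refl)
    fix i have "cos (2 * (2 * t i)) = 2 * (cos (2 * t i))\<^sup>2 - 1" by (rule cos_double_cos)
    then show "(cos (2 * t i))\<^sup>2 = 1 / 2 + cos (2 * (2 * t i)) / 2" by (simp add: field_simps)
  qed
  also have "\<dots> = real N / 2" using sC4 by (simp add: sum.distrib sum_divide_distrib[symmetric])
  finally have sCC: "(\<Sum>i<N. (C i)\<^sup>2) = real N / 2" .
  have "(\<Sum>i<N. (S i)\<^sup>2) = (\<Sum>i<N. 1 / 2 - cos (2 * (2 * t i)) / 2)"
    unfolding S_def
  proof (intro sum.cong refl)
    fix i have "cos (2 * (2 * t i)) = 1 - 2 * (sin (2 * t i))\<^sup>2" by (rule cos_double_sin)
    then show "(sin (2 * t i))\<^sup>2 = 1 / 2 - cos (2 * (2 * t i)) / 2" by (simp add: field_simps)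
  qed
  also have "\<dots> = real N / 2" using sC4 by (simp add: sum_subtractf sum_divide_distrib[symmetric])
  finally have sSS: "(\<Sum>i<N. (S i)\<^sup>2) = real N / 2" .
  have "(\<Sum>i<N. S i * C i) = (\<Sum>i<N. sin (2 * (2 * t i)) / 2)"
    unfolding S_def C_def
  proof (intro sum.cong refl)
    fix i have "sin (2 * (2 * t i)) = 2 * sin (2 * t i) * cos (2 * t i)" by (rule sin_double)
    then show "sin (2 * t i) * cos (2 * t i) = sin (2 * (2 * t i)) / 2" by simp
  qed
  also have "\<dots> = 0" using sS4 by (simp add: sum_divide_distrib[symmetric])
  finally have sSC: "(\<Sum>i<N. S i * C i) = 0" .
  have "0 = l\<^sup>2 * (\<Sum>i<N. C i)" using sC by simp
  also have "\<dots> = (\<Sum>i<N. ((a + b) / 2 + (a - b) / 2 * C i + w * S i) * C i)"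
    unfolding sum_distrib_left using id by (intro sum.cong refl) (simp add: mult.commute)
  also have "\<dots> = (\<Sum>i<N. (a + b) / 2 * C i + (a - b) / 2 * (C i)\<^sup>2 + w * (S i * C i))"
    by (intro sum.cong refl) (simp add: algebra_simps power2_eq_square)
  also have "\<dots> = (a + b) / 2 * (\<Sum>i<N. C i) + (a - b) / 2 * (\<Sum>i<N. (C i)\<^sup>2) + w * (\<Sum>i<N. S i * C i)"
    by (simp add: sum.distrib sum_distrib_left)
  also have "\<dots> = (a - b) / 2 * (real N / 2)" using sC sCC sSC by simp
  finally have ab: "a = b" using N0 by simp
  have "0 = l\<^sup>2 * (\<Sum>i<N. S i)" using sS by simp
  also have "\<dots> = (\<Sum>i<N. ((a + b) / 2 + (a - b) / 2 * C i + w * S i) * S i)"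
    unfolding sum_distrib_left using id by (intro sum.cong refl) (simp add: mult.commute)
  also have "\<dots> = (\<Sum>i<N. (a + b) / 2 * S i + (a - b) / 2 * (S i * C i) + w * (S i)\<^sup>2)"
    by (intro sum.cong refl) (simp add: algebra_simps power2_eq_square)
  also have "\<dots> = (a + b) / 2 * (\<Sum>i<N. S i) + (a - b) / 2 * (\<Sum>i<N. S i * C i) + w * (\<Sum>i<N. (S i)\<^sup>2)"
    by (simp add: sum.distrib sum_distrib_left)
  also have "\<dots> = w * (real N / 2)" using sS sSS sSC by simp
  finally have "w = 0" using N0 by simp
  then show "inner A B = 0" unfolding w_def .
  show "norm A = l" by (rule nA)
  have "norm B = norm A" using ab unfolding a_def b_def by (simp add: norm_eq_sqrt_inner)
  then show "norm B = l" using nA by simp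
qed

lemma circle_from_edges:
  fixes y :: "nat \<Rightarrow> real^'d" and A B :: "real^'d"
  assumes N: "N \<ge> 3"
    and e: "\<forall>i. Suc i < N \<longrightarrow> y (Suc i) - y i = cos (2 * pi * real i / real N) *\<^sub>R A + sin (2 * pi * real i / real N) *\<^sub>R B"
  defines "d \<equiv> 2 * pi / real N"
  defines "K \<equiv> 2 - 2 * cos d"
  defines "P \<equiv> ((cos d - 1) / K) *\<^sub>R A - (sin d / K) *\<^sub>R B"
  defines "R \<equiv> (sin d / K) *\<^sub>R A + ((cos d - 1) / K) *\<^sub>R B"
  shows "K > 0" and "\<forall>i<N. y i = (y 0 - P) + cos (2 * pi * real i / real N) *\<^sub>R P + sin (2 * pi * real i / real N) *\<^sub>R R"
proof -
  have N0: "real N > 0" using N by simp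
  have d0: "0 < d" "d < 2 * pi" unfolding d_def using N by (auto simp: field_simps)
  have "cos d < 1"
  proof -
    have "cos d \<noteq> 1"
    proof
      assume "cos d = 1"
      then obtain n :: int where n: "d = real_of_int n * 2 * pi" using cos_one_2pi_int by blast
      then have a: "0 < real_of_int n * (2 * pi)" "real_of_int n * (2 * pi) < 1 * (2 * pi)"
        using d0 by (simp_all add: mult.assoc)
      then have "0 < real_of_int n" by (simp add: zero_less_mult_iff)
      moreover have "real_of_int n < 1" using a(2) by (rule mult_right_less_imp_less) simp
      ultimately have "0 < n" "n < 1" by simp_all
      then show False by linarith
    qed
    then show ?thesis using cos_le_one[of d] by linarith
  qed
  then show Kpos: "K > 0" unfolding K_def by simp
  have Keq: "K = (cos d - 1)\<^sup>2 + (sin d)\<^sup>2" unfolding K_def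
    by (simp add: power2_diff algebra_simps)
  have step: "(cos (t + d) - cos t) *\<^sub>R P + (sin (t + d) - sin t) *\<^sub>R R = cos t *\<^sub>R A + sin t *\<^sub>R B" for t
  proof -
    define al where "al = cos (t + d) - cos t"
    define be where "be = sin (t + d) - sin t"
    have al: "al = cos t * (cos d - 1) - sin t * sin d" unfolding al_def cos_add by (simp add: algebra_simps)
    have be: "be = sin t * (cos d - 1) + cos t * sin d" unfolding be_def sin_add by (simp add: algebra_simps)
    have c1: "al * ((cos d - 1) / K) + be * (sin d / K) = cos t"
    proof -
      have "al * (cos d - 1) + be * sin d = cos t * ((cos d - 1)\<^sup>2 + (sin d)\<^sup>2)"
        unfolding al be power2_eq_square by algebra
      then show ?thesis using Kpos unfolding Keq[symmetric] by (simp add: field_simps)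
    qed
    have c2: "- (al * (sin d / K)) + be * ((cos d - 1) / K) = sin t"
    proof -
      have "- (al * sin d) + be * (cos d - 1) = sin t * ((cos d - 1)\<^sup>2 + (sin d)\<^sup>2)"
        unfolding al be power2_eq_square by algebra
      then show ?thesis using Kpos unfolding Keq[symmetric] by (simp add: field_simps)
    qed
    have "al *\<^sub>R P + be *\<^sub>R R = (al * ((cos d - 1) / K) + be * (sin d / K)) *\<^sub>R A
        + (- (al * (sin d / K)) + be * ((cos d - 1) / K)) *\<^sub>R B"
      unfolding P_def R_def by (simp add: algebra_simps scaleR_add_left)
    then have "al *\<^sub>R P + be *\<^sub>R R = cos t *\<^sub>R A + sin t *\<^sub>R B" unfolding c1 c2 .
    then show ?thesis unfolding al_def be_def .
  qed
  show "\<forall>i<N. y i = (y 0 - P) + cos (2 * pi * real i / real N) *\<^sub>R P + sin (2 * pi * real i / real N) *\<^sub>R R"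
  proof (intro allI impI)
    fix i assume "i < N"
    then show "y i = (y 0 - P) + cos (2 * pi * real i / real N) *\<^sub>R P + sin (2 * pi * real i / real N) *\<^sub>R R"
    proof (induction i)
      case 0 then show ?case by simp
    next
      case (Suc i)
      have IH: "y i = (y 0 - P) + cos (2 * pi * real i / real N) *\<^sub>R P + sin (2 * pi * real i / real N) *\<^sub>R R"
        using Suc by simp
      have th: "2 * pi * real (Suc i) / real N = 2 * pi * real i / real N + d"
        unfolding d_def by (simp add: field_simps add_divide_distrib)
      have "y (Suc i) = y i + (cos (2 * pi * real i / real N) *\<^sub>R A + sin (2 * pi * real i / real N) *\<^sub>R B)"
        using e Suc.prems by (metis add_diff_cancel_left' diff_add_cancel add.commute)
      also have "\<dots> = (y 0 - P) + cos (2 * pi * real i / real N) *\<^sub>R P + sin (2 * pi * real i / real N) *\<^sub>R R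
          + ((cos (2 * pi * real i / real N + d) - cos (2 * pi * real i / real N)) *\<^sub>R P
           + (sin (2 * pi * real i / real N + d) - sin (2 * pi * real i / real N)) *\<^sub>R R)"
        unfolding IH step ..
      also have "\<dots> = (y 0 - P) + cos (2 * pi * real (Suc i) / real N) *\<^sub>R P + sin (2 * pi * real (Suc i) / real N) *\<^sub>R R"
        unfolding th by (simp add: algebra_simps)
      finally show ?case .
    qed
  qed
qed

lemma orth_comb:
  fixes A B :: "real^'d"
  assumes AB: "inner A B = 0" "norm A = l" "norm B = l"
  shows "inner (al *\<^sub>R A + be *\<^sub>R B) (ga *\<^sub>R A + de *\<^sub>R B) = (al * ga + be * de) * l\<^sup>2"
proof -
  have AA: "inner A A = l\<^sup>2" "inner B B = l\<^sup>2" "inner B A = 0" using AB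
    by (simp_all add: power2_norm_eq_inner[symmetric] inner_commute)
  show ?thesis by (simp add: inner_add_left inner_add_right AA AB algebra_simps)
qed

lemma PR_props:
  fixes A B :: "real^'d"
  assumes K: "K = (cos d - 1)\<^sup>2 + (sin d)\<^sup>2" "K > 0"
    and AB: "inner A B = 0" "norm A = l" "norm B = l"
  defines "P \<equiv> ((cos d - 1) / K) *\<^sub>R A - (sin d / K) *\<^sub>R B"
  defines "R \<equiv> (sin d / K) *\<^sub>R A + ((cos d - 1) / K) *\<^sub>R B"
  shows "inner P R = 0" "(norm P)\<^sup>2 = l\<^sup>2 / K" "(norm R)\<^sup>2 = l\<^sup>2 / K"
proof -
  define al where "al = (cos d - 1) / K"
  define be where "be = sin d / K"
  have P: "P = al *\<^sub>R A + (- be) *\<^sub>R B" unfolding P_def al_def be_def by simp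
  have R: "R = be *\<^sub>R A + al *\<^sub>R B" unfolding R_def al_def be_def by simp
  show "inner P R = 0" unfolding P R orth_comb[OF AB] by (simp add: algebra_simps)
  have s: "al * al + be * be = 1 / K"
  proof -
    have "al * al + be * be = ((cos d - 1)\<^sup>2 + (sin d)\<^sup>2) / K\<^sup>2"
      unfolding al_def be_def by (simp add: power2_eq_square add_divide_distrib)
    also have "\<dots> = 1 / K" unfolding K(1)[symmetric] using K(2) by (simp add: power2_eq_square)
    finally show ?thesis .
  qed
  show "(norm P)\<^sup>2 = l\<^sup>2 / K" unfolding power2_norm_eq_inner P orth_comb[OF AB]
    using s by simp
  show "(norm R)\<^sup>2 = l\<^sup>2 / K" unfolding power2_norm_eq_inner R orth_comb[OF AB]
    using s by (simp add: add.commute)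
qed

theorem theorem4p1:
  fixes N m :: nat and l :: real and Q :: "nat \<Rightarrow> real^'d"
  assumes "CARD('d) \<ge> 2" and "N \<ge> 4" and "l > 0"
    and "2 \<le> m" and "m \<le> N div 2"
    and "regular_polygon N l Q"
  shows "\<exists>\<epsilon>>0. \<forall>y :: nat \<Rightarrow> real^'d.
           equilateral_polygon N l y \<and> (\<forall>i<N. dist (y i) (Q i) < \<epsilon>) \<and>
           \<not> (\<exists>f. euclidean_transformation f \<and> (\<forall>i<N. y i = f (Q i)))
           \<longrightarrow> diag_sum N m y < diag_sum N m Q"
proof -
  note N4 = assms(2) and lpos = assms(3) and m2 = assms(4)
  have mN: "2 * m \<le> N" using assms(5) by linarith
  have N0: "N > 0" using N4 by simp
  have mlt: "m < N" using mN m2 by linarith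
  define r where "r = l / (2 * sin (pi / real N))"
  define th where "th i = 2 * pi * real i / real N" for i
  obtain c' u' v' where uv': "norm u' = 1" "norm v' = 1" "inner u' v' = 0"
    and Qf: "\<forall>i<N. Q i = c' + r *\<^sub>R (cos (th i) *\<^sub>R u' + sin (th i) *\<^sub>R v')"
    using assms(6) unfolding regular_polygon_def r_def th_def by blast
  have sinpos: "sin (pi / real N) > 0"
    using N4 by (intro sin_gt_zero) (auto simp: field_simps)
  have rpos: "r > 0" unfolding r_def using sinpos lpos by simp
  have r2: "r * (2 * sin (pi / real N)) = l" unfolding r_def using sinpos by simp
  define F where "F = F1 N m"
  have Fnn: "F \<ge> 0" unfolding F_def F1_def by simp
  define dl where "dl = l * sqrt F"
  have dlnn: "dl \<ge> 0" unfolding dl_def using lpos Fnn by simp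
  have dl2: "dl\<^sup>2 = F * l\<^sup>2" unfolding dl_def using Fnn by (simp add: power_mult_distrib)
  have dQ: "dist (Q i) (Q ((i + m) mod N)) = dl" if i: "i < N" for i
  proof -
    have "(dist (Q i) (Q ((i + m) mod N)))\<^sup>2 = r\<^sup>2 * (4 * (sin (real m * pi / real N))\<^sup>2)"
      by (rule reg_diag[OF uv' N0 mlt i, where c=c' and r=r]) (use Qf in \<open>simp add: th_def\<close>)
    also have "\<dots> = r\<^sup>2 * (F * (4 * (sin (pi / real N))\<^sup>2))"
      unfolding F_def F1_trig[OF m2 mN] ..
    also have "\<dots> = F * (r * (2 * sin (pi / real N)))\<^sup>2" by (simp add: power_mult_distrib)
    also have "\<dots> = dl\<^sup>2" unfolding r2 dl2 ..
    finally show ?thesis using dlnn by (simp add: power2_eq_iff_nonneg)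
  qed
  have DQ: "diag_sum N m Q = real N * dl"
    unfolding diag_sum_def using dQ by simp
  show ?thesis
  proof (rule exI[of _ 1], intro conjI allI impI)
    show "(0::real) < 1" by simp
    fix y :: "nat \<Rightarrow> real^'d"
    assume H: "equilateral_polygon N l y \<and> (\<forall>i<N. dist (y i) (Q i) < 1) \<and>
           \<not> (\<exists>f. euclidean_transformation f \<and> (\<forall>i<N. y i = f (Q i)))"
    then have eqp: "equilateral_polygon N l y"
      and ncong: "\<not> (\<exists>f. euclidean_transformation f \<and> (\<forall>i<N. y i = f (Q i)))" by auto
    show "diag_sum N m y < diag_sum N m Q"
    proof (rule ccontr)
      assume "\<not> diag_sum N m y < diag_sum N m Q"
      then have ge: "real N * dl \<le> diag_sum N m y" unfolding DQ by simp
      define e where "e i = y ((i + 1) mod N) - y i" for i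
      have ne: "norm (e i) = l" if "i < N" for i
        using eqp that unfolding equilateral_polygon_def e_def by (simp add: dist_norm norm_minus_commute)
      have se: "(\<Sum>i<N. e i) = 0"
        unfolding e_def sum_subtractf using sum_shift1[of y N] by simp
      have win: "y ((i + m) mod N) - y i = (\<Sum>k<m. e ((i + k) mod N))" if i: "i < N" for i
      proof -
        have "e ((i + k) mod N) = y ((i + Suc k) mod N) - y ((i + k) mod N)" for k
        proof -
          have "((i + k) mod N + 1) mod N = (i + k + 1) mod N" by (rule mod_add_left_eq)
          then show ?thesis unfolding e_def by simp
        qed
        then have "(\<Sum>k<m. e ((i + k) mod N)) = (\<Sum>k<m. y ((i + Suc k) mod N) - y ((i + k) mod N))"
          by simp
        also have "\<dots> = y ((i + m) mod N) - y ((i + 0) mod N)"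
          by (rule sum_lessThan_telescope[where f = "\<lambda>k. y ((i + k) mod N)"])
        finally show ?thesis using i by simp
      qed
      define dd where "dd i = dist (y i) (y ((i + m) mod N))" for i
      have Dy: "diag_sum N m y = (\<Sum>i<N. dd i)" unfolding diag_sum_def dd_def ..
      have dd_norm: "dd i = norm (\<Sum>k<m. e ((i + k) mod N))" if "i < N" for i
        unfolding dd_def dist_norm using win[OF that] norm_minus_commute by metis
      define x where "x c i = e i $ c" for c i
      have sx: "(\<Sum>i<N. x c i) = 0" for c unfolding x_def using se by (simp flip: sum_component)
      have wc: "(\<Sum>k<m. e ((i + k) mod N)) $ c = (\<Sum>k<m. x c ((i + k) mod N))" for i c
        unfolding x_def by (simp add: sum_component)
      have cle: "(\<Sum>i<N. (\<Sum>k<m. x c ((i + k) mod N))\<^sup>2) \<le> F * (\<Sum>i<N. (x c i)\<^sup>2)" for c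
        unfolding F_def by (rule window_ineq(1)[OF m2 mN sx])
      have sdd2: "(\<Sum>i<N. (dd i)\<^sup>2) = (\<Sum>c\<in>UNIV. \<Sum>i<N. (\<Sum>k<m. x c ((i + k) mod N))\<^sup>2)"
      proof -
        have "(\<Sum>i<N. (dd i)\<^sup>2) = (\<Sum>i<N. \<Sum>c\<in>UNIV. (\<Sum>k<m. x c ((i + k) mod N))\<^sup>2)"
          by (rule sum.cong[OF refl]) (simp add: dd_norm norm2_vec wc x_def)
        also have "\<dots> = (\<Sum>c\<in>UNIV. \<Sum>i<N. (\<Sum>k<m. x c ((i + k) mod N))\<^sup>2)" by (rule sum.swap)
        finally show ?thesis .
      qed
      have sx2: "(\<Sum>c\<in>UNIV. \<Sum>i<N. (x c i)\<^sup>2) = real N * l\<^sup>2"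
      proof -
        have "(\<Sum>c\<in>UNIV. \<Sum>i<N. (x c i)\<^sup>2) = (\<Sum>i<N. \<Sum>c\<in>UNIV. (x c i)\<^sup>2)" by (rule sum.swap)
        also have "\<dots> = (\<Sum>i<N. (norm (e i))\<^sup>2)" unfolding x_def norm2_vec ..
        also have "\<dots> = (\<Sum>i<N. l\<^sup>2)" using ne by simp
        finally show ?thesis by simp
      qed
      have dd2le: "(\<Sum>i<N. (dd i)\<^sup>2) \<le> F * (real N * l\<^sup>2)"
      proof -
        have "(\<Sum>i<N. (dd i)\<^sup>2) \<le> (\<Sum>c\<in>UNIV. F * (\<Sum>i<N. (x c i)\<^sup>2))"
          unfolding sdd2 by (rule sum_mono) (rule cle)
        also have "\<dots> = F * (real N * l\<^sup>2)" unfolding sum_distrib_left[symmetric] sx2 ..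
        finally show ?thesis .
      qed
      have ddnn: "0 \<le> (\<Sum>i<N. dd i)" unfolding dd_def by (simp add: sum_nonneg)
      have cs1: "(\<Sum>i<N. dd i)\<^sup>2 \<le> real N * (\<Sum>i<N. (dd i)\<^sup>2)" by (rule cauchy_sum(1)[OF N0])
      have NF: "real N * (F * (real N * l\<^sup>2)) = (real N * dl)\<^sup>2"
        using dl2 by (simp add: power_mult_distrib power2_eq_square mult_ac)
      have lo: "(real N * dl)\<^sup>2 \<le> (\<Sum>i<N. dd i)\<^sup>2"
        using ge dlnn unfolding Dy by (intro power_mono) simp_all
      have up: "real N * (\<Sum>i<N. (dd i)\<^sup>2) \<le> (real N * dl)\<^sup>2"
        unfolding NF[symmetric] using dd2le N0 by (intro mult_left_mono) simp_all
      have E2: "(\<Sum>i<N. dd i)\<^sup>2 = real N * (\<Sum>i<N. (dd i)\<^sup>2)" using lo up cs1 by linarith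
      have E1: "(\<Sum>i<N. (dd i)\<^sup>2) = F * (real N * l\<^sup>2)" using lo up cs1 N0
        unfolding NF[symmetric] by (smt (verit) mult_le_cancel_left_pos of_nat_0_less_iff)
      have Sdd: "(\<Sum>i<N. dd i) = real N * dl"
        using E2 up lo ddnn dlnn N0 by (smt (verit) power2_le_imp_le zero_le_mult_iff of_nat_0_le_iff)
      have ddc: "dd i = dl" if "i < N" for i
        using cauchy_sum(2)[OF N0 E2] that N0 unfolding Sdd by simp
      have coord_eq: "(\<Sum>i<N. (\<Sum>k<m. x c ((i + k) mod N))\<^sup>2) = F * (\<Sum>i<N. (x c i)\<^sup>2)" for c
      proof -
        have "(\<Sum>c\<in>UNIV. F * (\<Sum>i<N. (x c i)\<^sup>2) - (\<Sum>i<N. (\<Sum>k<m. x c ((i + k) mod N))\<^sup>2)) = 0"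
          using E1 unfolding sum_subtractf sdd2 sum_distrib_left[symmetric] sx2 by simp
        then have "\<forall>c\<in>UNIV. F * (\<Sum>i<N. (x c i)\<^sup>2) - (\<Sum>i<N. (\<Sum>k<m. x c ((i + k) mod N))\<^sup>2) = 0"
          using sum_nonneg_eq_0_iff[of UNIV "\<lambda>c. F * (\<Sum>i<N. (x c i)\<^sup>2) - (\<Sum>i<N. (\<Sum>k<m. x c ((i + k) mod N))\<^sup>2)"]
            cle by simp
        then show ?thesis by simp
      qed
      have "\<forall>c. \<exists>ab. \<forall>i<N. x c i = fst ab * cos (th i) + snd ab * sin (th i)"
      proof
        fix c
        obtain a b where "\<forall>i<N. x c i = a * cos (2 * pi * real i / real N) + b * sin (2 * pi * real i / real N)"
          using window_ineq(2)[OF m2 mN sx coord_eq[unfolded F_def]] by blast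
        then show "\<exists>ab. \<forall>i<N. x c i = fst ab * cos (th i) + snd ab * sin (th i)"
          unfolding th_def by (intro exI[of _ "(a, b)"]) simp
      qed
      then obtain g where g: "\<forall>c. \<forall>i<N. x c i = fst (g c) * cos (th i) + snd (g c) * sin (th i)"
        by metis
      define A where "A = (\<chi> c. fst (g c))"
      define B where "B = (\<chi> c. snd (g c))"
      have eAB: "e i = cos (th i) *\<^sub>R A + sin (th i) *\<^sub>R B" if "i < N" for i
        unfolding vec_eq_iff A_def B_def using g that unfolding x_def by (simp add: mult.commute)
      have nAB: "\<forall>i<N. norm (cos (2 * pi * real i / real N) *\<^sub>R A + sin (2 * pi * real i / real N) *\<^sub>R B) = l"
        using ne eAB unfolding th_def by simp
      have AB: "inner A B = 0 \<and> norm A = l \<and> norm B = l"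
      proof (cases "N \<ge> 5")
        case True
        then show ?thesis using AB_orth[OF True nAB] by blast
      next
        case False
        then have N4e: "N = 4" using N4 by simp
        then have m2e: "m = 2" using m2 mN by simp
        have t0: "th 0 = 0" and t1: "th 1 = pi / 2" and t2: "th 2 = pi"
          unfolding th_def N4e by simp_all
        have "e 0 = cos (th 0) *\<^sub>R A + sin (th 0) *\<^sub>R B" by (rule eAB) (simp add: N4e)
        then have e0: "e 0 = A" unfolding t0 by simp
        have "e 1 = cos (th 1) *\<^sub>R A + sin (th 1) *\<^sub>R B" by (rule eAB) (simp add: N4e)
        then have e1: "e 1 = B" unfolding t1 by simp
        have "e 2 = cos (th 2) *\<^sub>R A + sin (th 2) *\<^sub>R B" by (rule eAB) (simp add: N4e)
        then have e2: "e 2 = - A" unfolding t2 by simp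
        have nA: "norm A = l" using ne[of 0] e0 N4e by simp
        have nB: "norm B = l" using ne[of 1] e1 N4e by simp
        have "dd 0 = norm (e 0 + e 1)" using dd_norm[of 0] N4e m2e by (simp add: numeral_2_eq_2)
        moreover have "dd 1 = norm (e 1 + e 2)" using dd_norm[of 1] N4e m2e by (simp add: numeral_2_eq_2)
        moreover have "dd 0 = dd 1" using ddc[of 0] ddc[of 1] N4e by simp
        ultimately have "norm (A + B) = norm (B - A)" using e0 e1 e2 by simp
        then have "(norm (A + B))\<^sup>2 = (norm (B - A))\<^sup>2" by simp
        then have "inner A B = 0" unfolding power2_norm_eq_inner
          by (simp add: inner_add_left inner_add_right inner_diff_left inner_diff_right inner_commute)
        then show ?thesis using nA nB by simp
      qed
      have eS: "\<forall>i. Suc i < N \<longrightarrow> y (Suc i) - y i = cos (2 * pi * real i / real N) *\<^sub>R A + sin (2 * pi * real i / real N) *\<^sub>R B"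
      proof (intro allI impI)
        fix i assume i: "Suc i < N"
        then have "e i = y (Suc i) - y i" unfolding e_def by simp
        then show "y (Suc i) - y i = cos (2 * pi * real i / real N) *\<^sub>R A + sin (2 * pi * real i / real N) *\<^sub>R B"
          using eAB[of i] i unfolding th_def by simp
      qed
      have N3: "N \<ge> 3" using N4 by simp
      define d where "d = 2 * pi / real N"
      define K where "K = 2 - 2 * cos d"
      define P where "P = ((cos d - 1) / K) *\<^sub>R A - (sin d / K) *\<^sub>R B"
      define R where "R = (sin d / K) *\<^sub>R A + ((cos d - 1) / K) *\<^sub>R B"
      have Kp: "K > 0" using circle_from_edges(1)[OF N3 eS] unfolding K_def d_def .
      have ypos: "\<forall>i<N. y i = (y 0 - P) + cos (2 * pi * real i / real N) *\<^sub>R P + sin (2 * pi * real i / real N) *\<^sub>R R"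
        using circle_from_edges(2)[OF N3 eS] unfolding P_def R_def K_def d_def .
      have Keq: "K = (cos d - 1)\<^sup>2 + (sin d)\<^sup>2" unfolding K_def
        by (simp add: power2_diff algebra_simps)
      have ABs: "inner A B = 0" "norm A = l" "norm B = l" using AB by auto
      have PR: "inner P R = 0" "(norm P)\<^sup>2 = l\<^sup>2 / K" "(norm R)\<^sup>2 = l\<^sup>2 / K"
        using PR_props[OF Keq Kp ABs] unfolding P_def R_def by auto
      have K4: "K = 4 * (sin (pi / real N))\<^sup>2" unfolding K_def d_def
        using two_minus_cos[of "pi / real N"] by simp
      have r2K: "r\<^sup>2 = l\<^sup>2 / K" unfolding r_def K4 by (simp add: power_divide power_mult_distrib)
      have nP: "norm P = r" using PR(2) r2K rpos by (metis norm_ge_zero power2_eq_iff_nonneg less_imp_le)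
      have nR: "norm R = r" using PR(3) r2K rpos by (metis norm_ge_zero power2_eq_iff_nonneg less_imp_le)
      define u where "u = (1 / r) *\<^sub>R P"
      define v where "v = (1 / r) *\<^sub>R R"
      have uv: "norm u = 1" "norm v = 1" "inner u v = 0"
        unfolding u_def v_def using nP nR rpos PR(1) by auto
      have Pu: "P = r *\<^sub>R u" and Rv: "R = r *\<^sub>R v" unfolding u_def v_def using rpos by auto
      obtain f where f: "euclidean_transformation f"
        and fQ: "\<forall>r a b. f (c' + r *\<^sub>R (a *\<^sub>R u' + b *\<^sub>R v')) = (y 0 - P) + r *\<^sub>R (a *\<^sub>R u + b *\<^sub>R v)"
        using iso_exists[OF uv uv', where c = "y 0 - P" and c' = c'] by blast
      have "\<forall>i<N. y i = f (Q i)"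
      proof (intro allI impI)
        fix i assume i: "i < N"
        have "f (Q i) = (y 0 - P) + r *\<^sub>R (cos (th i) *\<^sub>R u + sin (th i) *\<^sub>R v)"
          using Qf i fQ by simp
        also have "\<dots> = y i" using ypos i unfolding Pu Rv th_def by (simp add: algebra_simps)
        finally show "y i = f (Q i)" by simp
      qed
      then show False using ncong f by blast
    qed
  qed
qed

end
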